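(* Let $N$ be a plain structural conflict Petri net. If $N$ has a fully reachable pure $\mathsf M$, then $N$ is not distributable up to step failures equivalence, i.e. there is no distributed Petri net $D$ with $D\approx_{\mathscr F}N$.
   Context: Fix a set $\mathrm{Act}$ of visible actions and an invisible action $\tau\notin\mathrm{Act}$. A (labelled) Petri net is $N=(S,T,F,M_0,\ell)$ with $S,T$ disjoint, $F:(S\times T)\cup(T\times S)\to\mathbb N$, $M_0\in\mathbb N^S$, $\ell:T\to\mathrm{Act}\cup\{\tau\}$. ${}^\bullet x(y)=F(y,x)$, $x^\bullet(y)=F(x,y)$, extended additively to finite multisets; multiset $\le,\cap,\cup$ pointwise $\le$, min, max. For finite nonempty multiset $G$ of transitions, $M[G\rangle M'$ iff ${}^\bullet G\le M$ and $M'=M-{}^\bullet G+G^\bullet$. Reachable markings: closure of $\{M_0\}$ under steps. $t\smile u$ iff $M[\{t\}+\{u\}\rangle$ for a reachable $M$. Structural conflict net: $t\smile u\Rightarrow{}^\bullet t\cap{}^\bullet u=\emptyset$. Plain: $\ell$ injective and never $\tau$. Fully reachable pure $\mathsf M$: $t,u,v\in T$ with ${}^\bullet t\cap{}^\bullet u\neq\emptyset$, ${}^\bullet u\cap{}^\bullet v\neq\emptyset$, ${}^\bullet t\cap{}^\bullet v=\emptyset$, and a reachable $M$ with ${}^\bullet t\cup{}^\bullet u\cup{}^\bullet v\le M$. Distributed net: there is a function $D$ on $S\cup T$ with (1) $s\in{}^\bullet t\Rightarrow D(t)=D(s)$, (2) $t\smile u\Rightarrow D(t)\neq D(u)$. Step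 failures equivalence: $M\xrightarrow{\alpha}M'$ iff $M[t\rangle M'$ with $\ell(t)=\alpha$; $\Rightarrow$ is the reflexive transitive closure of $\xrightarrow{\tau}$; $M\overset{a_1\cdots a_n}{\Longrightarrow}M'$ iff $M\Rightarrow\xrightarrow{a_1}\Rightarrow\cdots\xrightarrow{a_n}\Rightarrow M'$. For a step $A$ (finite nonempty multiset over $\mathrm{Act}$), $M\xrightarrow{A}$ iff $M[G\rangle$ for a finite multiset $G$ of transitions, none labelled $\tau$, whose label multiset is $A$. $(\sigma,X)$, $\sigma\in\mathrm{Act}^*$, $X$ a finite set of steps, is a step failure pair iff some $M$ has $M_0\overset{\sigma}{\Longrightarrow}M$, $M\not\xrightarrow{\tau}$, and $M\not\xrightarrow{A}$ for all $A\in X$. $N_1\approx_{\mathscr F}N_2$ iff they have the same step failure pairs. *)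

theory Defs
  imports Main "HOL-Library.Multiset"
begin

datatype 'a label = Vis 'a | Tau

text \<open>S and T are disjoint since they live in different types.  Markings are functions
  's \<Rightarrow> nat (multisets over places, pointwise order/min/max = le/inf/sup).\<close>
record ('s, 't, 'a) petri_net =
  places :: "'s set"
  transitions :: "'t set"
  flow_st :: "'s \<Rightarrow> 't \<Rightarrow> nat"
  flow_ts :: "'t \<Rightarrow> 's \<Rightarrow> nat"
  initial :: "'s \<Rightarrow> nat"
  label :: "'t \<Rightarrow> 'a label"

definition wf_net :: "('s, 't, 'a) petri_net \<Rightarrow> bool" where
  "wf_net N \<longleftrightarrow>
     (\<forall>s t. (s \<notin> places N \<or> t \<notin> transitions N) \<longrightarrow> flow_st N s t = 0 \<and> flow_ts N t s = 0) \<and>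
     (\<forall>s. s \<notin> places N \<longrightarrow> initial N s = 0)"

definition pre_t :: "('s, 't, 'a) petri_net \<Rightarrow> 't \<Rightarrow> 's \<Rightarrow> nat" where
  "pre_t N t = (\<lambda>s. flow_st N s t)"

definition pre :: "('s, 't, 'a) petri_net \<Rightarrow> 't multiset \<Rightarrow> 's \<Rightarrow> nat" where
  "pre N G = (\<lambda>s. sum_mset (image_mset (\<lambda>t. flow_st N s t) G))"

definition post :: "('s, 't, 'a) petri_net \<Rightarrow> 't multiset \<Rightarrow> 's \<Rightarrow> nat" where
  "post N G = (\<lambda>s. sum_mset (image_mset (\<lambda>t. flow_ts N t s) G))"

definition fires :: "('s, 't, 'a) petri_net \<Rightarrow> ('s \<Rightarrow> nat) \<Rightarrow> 't multiset \<Rightarrow> ('s \<Rightarrow> nat) \<Rightarrow> bool" where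
  "fires N M G M' \<longleftrightarrow> G \<noteq> {#} \<and> set_mset G \<subseteq> transitions N \<and> pre N G \<le> M \<and>
     M' = (\<lambda>s. M s - pre N G s + post N G s)"

definition enabled :: "('s, 't, 'a) petri_net \<Rightarrow> ('s \<Rightarrow> nat) \<Rightarrow> 't multiset \<Rightarrow> bool" where
  "enabled N M G \<longleftrightarrow> (\<exists>M'. fires N M G M')"

inductive reachable :: "('s, 't, 'a) petri_net \<Rightarrow> ('s \<Rightarrow> nat) \<Rightarrow> bool" for N where
  init: "reachable N (initial N)"
| step: "reachable N M \<Longrightarrow> fires N M G M' \<Longrightarrow> reachable N M'"

definition concurrent :: "('s, 't, 'a) petri_net \<Rightarrow> 't \<Rightarrow> 't \<Rightarrow> bool" where
  "concurrent N t u \<longleftrightarrow> (\<exists>M. reachable N M \<and> enabled N M ({#t#} + {#u#}))"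

definition sc_net :: "('s, 't, 'a) petri_net \<Rightarrow> bool" where
  "sc_net N \<longleftrightarrow> (\<forall>t\<in>transitions N. \<forall>u\<in>transitions N.
     concurrent N t u \<longrightarrow> inf (pre_t N t) (pre_t N u) = (\<lambda>_. 0))"

definition plain :: "('s, 't, 'a) petri_net \<Rightarrow> bool" where
  "plain N \<longleftrightarrow> inj_on (label N) (transitions N) \<and> (\<forall>t\<in>transitions N. label N t \<noteq> Tau)"

definition has_pure_M :: "('s, 't, 'a) petri_net \<Rightarrow> bool" where
  "has_pure_M N \<longleftrightarrow> (\<exists>t\<in>transitions N. \<exists>u\<in>transitions N. \<exists>v\<in>transitions N.
     inf (pre_t N t) (pre_t N u) \<noteq> (\<lambda>_. 0) \<and>
     inf (pre_t N u) (pre_t N v) \<noteq> (\<lambda>_. 0) \<and>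
     inf (pre_t N t) (pre_t N v) = (\<lambda>_. 0) \<and>
     (\<exists>M. reachable N M \<and> sup (sup (pre_t N t) (pre_t N u)) (pre_t N v) \<le> M))"

text \<open>Distributed net: a function D on S \<union> T (codomain S + T suffices, since only the
  induced partition matters).\<close>
definition distributed :: "('s, 't, 'a) petri_net \<Rightarrow> bool" where
  "distributed N \<longleftrightarrow> (\<exists>D :: 's + 't \<Rightarrow> 's + 't.
     (\<forall>s\<in>places N. \<forall>t\<in>transitions N. flow_st N s t > 0 \<longrightarrow> D (Inr t) = D (Inl s)) \<and>
     (\<forall>t\<in>transitions N. \<forall>u\<in>transitions N. concurrent N t u \<longrightarrow> D (Inr t) \<noteq> D (Inr u)))"

definition lstep :: "('s, 't, 'a) petri_net \<Rightarrow> ('s \<Rightarrow> nat) \<Rightarrow> 'a label \<Rightarrow> ('s \<Rightarrow> nat) \<Rightarrow> bool" where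
  "lstep N M \<alpha> M' \<longleftrightarrow> (\<exists>t\<in>transitions N. label N t = \<alpha> \<and> fires N M {#t#} M')"

definition tau_star :: "('s, 't, 'a) petri_net \<Rightarrow> ('s \<Rightarrow> nat) \<Rightarrow> ('s \<Rightarrow> nat) \<Rightarrow> bool" where
  "tau_star N = (\<lambda>M M'. lstep N M Tau M')\<^sup>*\<^sup>*"

fun wtrace :: "('s, 't, 'a) petri_net \<Rightarrow> ('s \<Rightarrow> nat) \<Rightarrow> 'a list \<Rightarrow> ('s \<Rightarrow> nat) \<Rightarrow> bool" where
  "wtrace N M [] M' \<longleftrightarrow> tau_star N M M'"
| "wtrace N M (a # \<sigma>) M' \<longleftrightarrow>
     (\<exists>M1 M2. tau_star N M M1 \<and> lstep N M1 (Vis a) M2 \<and> wtrace N M2 \<sigma> M')"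

definition step_enabled :: "('s, 't, 'a) petri_net \<Rightarrow> ('s \<Rightarrow> nat) \<Rightarrow> 'a multiset \<Rightarrow> bool" where
  "step_enabled N M A \<longleftrightarrow>
     (\<exists>G. (\<forall>t\<in>#G. label N t \<noteq> Tau) \<and> image_mset (label N) G = image_mset Vis A \<and> enabled N M G)"

definition step_failure_pair :: "('s, 't, 'a) petri_net \<Rightarrow> 'a list \<Rightarrow> 'a multiset set \<Rightarrow> bool" where
  "step_failure_pair N \<sigma> X \<longleftrightarrow> finite X \<and> (\<forall>A\<in>X. A \<noteq> {#}) \<and>
     (\<exists>M. wtrace N (initial N) \<sigma> M \<and> \<not> (\<exists>M'. lstep N M Tau M') \<and>
          (\<forall>A\<in>X. \<not> step_enabled N M A))"

definition sf_equiv :: "('s1, 't1, 'a) petri_net \<Rightarrow> ('s2, 't2, 'a) petri_net \<Rightarrow> bool" where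
  "sf_equiv N1 N2 \<longleftrightarrow> (\<forall>\<sigma> X. step_failure_pair N1 \<sigma> X \<longleftrightarrow> step_failure_pair N2 \<sigma> X)"

end

theory Submission
  imports Defs
begin

lemma image_two:
  assumes "image_mset f G = {#x, y#}"
  shows "\<exists>p q. G = {#p, q#} \<and> f p = x \<and> f q = y"
proof -
  from msed_map_invR[of f G x "{#y#}"] assms obtain G1 p where
    "G = add_mset p G1" "f p = x" "image_mset f G1 = {#y#}" by auto
  moreover from msed_map_invR[of f G1 y "{#}"] this(3) obtain G2 q where
    "G1 = add_mset q G2" "f q = y" "image_mset f G2 = {#}" by auto
  ultimately show ?thesis by auto
qed

lemma image_one:
  assumes "image_mset f G = {#x#}"
  shows "\<exists>p. G = {#p#} \<and> f p = x"
proof -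
  from msed_map_invR[of f G x "{#}"] assms obtain G1 p where
    "G = add_mset p G1" "f p = x" "image_mset f G1 = {#}" by auto
  then show ?thesis by auto
qed

lemma wtrace_tau:
  "wtrace N M \<sigma> M1 \<Longrightarrow> tau_star N M1 M2 \<Longrightarrow> wtrace N M \<sigma> M2"
proof (induction \<sigma> arbitrary: M)
  case Nil then show ?case by (auto simp: tau_star_def)
next
  case (Cons a \<sigma>) then show ?case by auto
qed

lemma wtrace_snoc:
  "wtrace N M \<sigma> M1 \<Longrightarrow> lstep N M1 (Vis a) M2 \<Longrightarrow> wtrace N M (\<sigma> @ [a]) M2"
proof (induction \<sigma> arbitrary: M)
  case Nil then show ?case by (auto simp: tau_star_def)
next
  case (Cons b \<sigma>) then show ?case by auto
qed

lemma fires_split: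
  assumes "fires N M (add_mset t G) M'" "G \<noteq> {#}"
  shows "fires N M {#t#} (\<lambda>s. M s - flow_st N s t + flow_ts N t s) \<and>
         fires N (\<lambda>s. M s - flow_st N s t + flow_ts N t s) G M'"
proof -
  have le: "\<And>s. flow_st N s t + pre N G s \<le> M s"
    using assms(1) unfolding fires_def pre_def le_fun_def by auto
  have M': "M' = (\<lambda>s. M s - (flow_st N s t + pre N G s) + (flow_ts N t s + post N G s))"
    using assms(1) unfolding fires_def pre_def post_def by auto
  show ?thesis
    unfolding fires_def
  proof (intro conjI)
    show "set_mset {#t#} \<subseteq> transitions N" "set_mset G \<subseteq> transitions N"
      using assms(1) by (auto simp: fires_def)
    show "pre N {#t#} \<le> M" using le by (auto simp: pre_def le_fun_def intro: le_trans[OF le_add1])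
    show "pre N G \<le> (\<lambda>s. M s - flow_st N s t + flow_ts N t s)"
      using le by (auto simp: le_fun_def) (metis add.commute add_le_imp_le_diff trans_le_add1)
    show "M' = (\<lambda>s. (M s - flow_st N s t + flow_ts N t s) - pre N G s + post N G s)"
      unfolding M' using le by (intro ext) (metis add.commute add_le_imp_le_diff diff_diff_left le_add_diff_inverse2 add.assoc le_add1 le_trans add_diff_assoc2)
  qed (use assms(2) in \<open>auto simp: pre_def post_def\<close>)
qed

lemma fires_wtrace:
  assumes plain: "\<forall>t\<in>transitions N. label N t \<noteq> Tau"
  shows "fires N M G M' \<Longrightarrow> \<exists>\<sigma>. wtrace N M \<sigma> M'"
proof (induction G arbitrary: M)
  case empty then show ?case by (simp add: fires_def)
next
  case (add t G)
  have tT: "t \<in> transitions N" using add.prems by (simp add: fires_def)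
  then obtain a where la: "label N t = Vis a" using plain by (cases "label N t") auto
  show ?case
  proof (cases "G = {#}")
    case True
    then have "lstep N M (Vis a) M'" using add.prems tT la by (auto simp: lstep_def)
    then have "wtrace N M [a] M'" by (auto simp: tau_star_def)
    then show ?thesis by blast
  next
    case False
    from fires_split[OF add.prems False] obtain M1 where
      f1: "fires N M {#t#} M1" and f2: "fires N M1 G M'" by blast
    from add.IH[OF f2] obtain \<sigma> where "wtrace N M1 \<sigma> M'" by blast
    moreover have "lstep N M (Vis a) M1" using f1 tT la by (auto simp: lstep_def)
    ultimately have "wtrace N M (a # \<sigma>) M'" by (auto simp: tau_star_def)
    then show ?thesis by blast
  qed
qed

lemma wtrace_app:
  "wtrace N M \<sigma> M1 \<Longrightarrow> wtrace N M1 \<tau> M2 \<Longrightarrow> wtrace N M (\<sigma> @ \<tau>) M2"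
proof (induction \<sigma> arbitrary: M)
  case Nil
  then show ?case
  proof (induction \<tau> arbitrary: M1)
    case Nil then show ?case by (auto simp: tau_star_def)
  next
    case (Cons a \<tau>)
    then obtain X Y where "tau_star N M1 X" "lstep N X (Vis a) Y" "wtrace N Y \<tau> M2" by auto
    moreover have "tau_star N M X" using Cons.prems(1) \<open>tau_star N M1 X\<close>
      by (auto simp: tau_star_def)
    ultimately show ?case by auto
  qed
next
  case (Cons b \<sigma>) then show ?case by auto
qed

lemma reach_wtrace:
  assumes plain: "\<forall>t\<in>transitions N. label N t \<noteq> Tau"
  shows "reachable N M \<Longrightarrow> \<exists>\<sigma>. wtrace N (initial N) \<sigma> M"
proof (induction rule: reachable.induct)
  case init
  have "wtrace N (initial N) [] (initial N)" by (simp add: tau_star_def)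
  then show ?case by blast
next
  case (step M G M')
  then obtain \<sigma> where "wtrace N (initial N) \<sigma> M" by blast
  moreover obtain \<tau> where "wtrace N M \<tau> M'" using fires_wtrace[OF plain step(2)] by blast
  ultimately show ?case using wtrace_app by blast
qed

lemma tau_reach: "tau_star N M M' \<Longrightarrow> reachable N M \<Longrightarrow> reachable N M'"
  unfolding tau_star_def
  by (induction rule: rtranclp_induct) (auto simp: lstep_def intro: reachable.step)

lemma wtrace_reach: "wtrace N M \<sigma> M' \<Longrightarrow> reachable N M \<Longrightarrow> reachable N M'"
proof (induction \<sigma> arbitrary: M)
  case Nil then show ?case using tau_reach by auto
next
  case (Cons a \<sigma>)
  then obtain X Y where 1: "tau_star N M X" "lstep N X (Vis a) Y" "wtrace N Y \<sigma> M'" by auto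
  have "reachable N X" using 1(1) Cons.prems(2) tau_reach by blast
  then have "reachable N Y" using 1(2) by (auto simp: lstep_def intro: reachable.step)
  then show ?case using Cons.IH 1(3) by blast
qed

lemma plain_tau: assumes "plain N" shows "tau_star N M M' \<Longrightarrow> M' = M"
  unfolding tau_star_def
proof (induction rule: rtranclp_induct)
  case base then show ?case by simp
next
  case (step y z) then show ?case using assms by (auto simp: lstep_def plain_def)
qed

lemma plain_det:
  assumes "plain N"
  shows "wtrace N M \<sigma> M1 \<Longrightarrow> wtrace N M \<sigma> M2 \<Longrightarrow> M1 = M2"
proof (induction \<sigma> arbitrary: M)
  case Nil then show ?case using plain_tau[OF assms] by auto
next
  case (Cons a \<sigma>)
  from Cons.prems obtain X Y where 1: "tau_star N M X" "lstep N X (Vis a) Y" "wtrace N Y \<sigma> M1" by auto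
  from Cons.prems obtain X' Y' where 2: "tau_star N M X'" "lstep N X' (Vis a) Y'" "wtrace N Y' \<sigma> M2" by auto
  have "X = M" "X' = M" using 1 2 plain_tau[OF assms] by auto
  moreover have "Y = Y'" using 1(2) 2(2) assms unfolding lstep_def plain_def fires_def
    \<open>X = M\<close> \<open>X' = M\<close> by (metis inj_on_def)
  ultimately show ?case using Cons.IH 1 2 by blast
qed

lemma enabled_two:
  assumes "p \<in> transitions N" "q \<in> transitions N"
    and "\<And>s. flow_st N s p + flow_st N s q \<le> M s"
  shows "enabled N M {#p, q#}"
  using assms unfolding enabled_def fires_def pre_def le_fun_def by auto

lemma enabled_one:
  assumes "p \<in> transitions N" "\<And>s. flow_st N s p \<le> M s"
  shows "enabled N M {#p#}"
  using assms unfolding enabled_def fires_def pre_def le_fun_def by auto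

lemma step_enabled_two_plain:
  assumes "plain N" "p \<in> transitions N" "q \<in> transitions N"
    "label N p = Vis x" "label N q = Vis y" "step_enabled N M {#x, y#}"
  shows "enabled N M {#p, q#}"
proof -
  from assms(6) obtain G where G: "image_mset (label N) G = {#Vis x, Vis y#}" "enabled N M G"
    unfolding step_enabled_def by auto
  from image_two[OF G(1)] obtain p' q' where pq: "G = {#p', q'#}" "label N p' = Vis x" "label N q' = Vis y"
    by blast
  have "p' \<in> transitions N" "q' \<in> transitions N" using G(2) pq(1)
    unfolding enabled_def fires_def by auto
  then have "p' = p" "q' = q" using assms pq unfolding plain_def inj_on_def by metis+
  then show ?thesis using G(2) pq by simp
qed

lemma enabled_pre:
  assumes "enabled N M G" "p \<in># G"
  shows "flow_st N s p \<le> M s"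
proof -
  have "pre N G s \<le> M s" using assms(1) unfolding enabled_def fires_def le_fun_def by auto
  moreover have "flow_st N s p \<le> pre N G s" unfolding pre_def using assms(2)
    by (metis multi_member_split image_mset_add_mset sum_mset.insert le_add1)
  ultimately show ?thesis by linarith
qed

lemma enabled_trans:
  assumes "enabled N M G" "p \<in># G"
  shows "p \<in> transitions N"
  using assms unfolding enabled_def fires_def by auto

lemma dist_combine:
  assumes "wf_net D" "\<forall>s\<in>places D. \<forall>t\<in>transitions D. flow_st D s t > 0 \<longrightarrow> Df (Inr t) = Df (Inl s)"
    "p \<in> transitions D" "q \<in> transitions D" "Df (Inr p) \<noteq> Df (Inr q)"
    "\<And>s. flow_st D s p \<le> M s" "\<And>s. flow_st D s q \<le> M s"
  shows "enabled D M {#p, q#}"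
proof (rule enabled_two[OF assms(3,4)])
  fix s
  show "flow_st D s p + flow_st D s q \<le> M s"
  proof (cases "flow_st D s p > 0 \<and> flow_st D s q > 0")
    case True
    then have "s \<in> places D" using assms(1) unfolding wf_net_def by (metis less_irrefl)
    then show ?thesis using True assms(2-5) by metis
  next
    case False then show ?thesis using assms(6,7)[of s] by auto
  qed
qed

theorem theorem5p6:
  fixes N :: "('s, 't, 'a) petri_net" and D :: "('s2, 't2, 'a) petri_net"
  assumes "wf_net N" and "plain N" and "sc_net N" and "has_pure_M N"
    and "wf_net D" and "distributed D"
  shows "\<not> sf_equiv D N"
proof
  assume eq: "sf_equiv D N"
  have pl: "\<forall>t\<in>transitions N. label N t \<noteq> Tau" using assms(2) by (simp add: plain_def)
  from assms(4) obtain t u v M where tuv: "t \<in> transitions N" "u \<in> transitions N" "v \<in> transitions N"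
    and i1: "inf (pre_t N t) (pre_t N u) \<noteq> (\<lambda>_. 0)"
    and i2: "inf (pre_t N u) (pre_t N v) \<noteq> (\<lambda>_. 0)"
    and i3: "inf (pre_t N t) (pre_t N v) = (\<lambda>_. 0)"
    and rM: "reachable N M" and sM: "sup (sup (pre_t N t) (pre_t N u)) (pre_t N v) \<le> M"
    unfolding has_pure_M_def by blast
  obtain a where la: "label N t = Vis a" using pl tuv by (cases "label N t") auto
  obtain b where lb: "label N u = Vis b" using pl tuv by (cases "label N u") auto
  obtain c where lc: "label N v = Vis c" using pl tuv by (cases "label N v") auto
  obtain \<sigma> where wN: "wtrace N (initial N) \<sigma> M" using reach_wtrace[OF pl rM] by blast
  have nT: "\<not> (\<exists>M'. lstep N M Tau M')" using pl by (auto simp: lstep_def)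
  have Mt: "\<And>s. flow_st N s t \<le> M s" and Mu: "\<And>s. flow_st N s u \<le> M s"
    and Mv: "\<And>s. flow_st N s v \<le> M s"
    using sM unfolding le_fun_def pre_t_def by (auto simp: sup_fun_def)
  have refab: "\<not> step_enabled N M {#a, b#}"
  proof
    assume "step_enabled N M {#a, b#}"
    then have "enabled N M {#t, u#}" using step_enabled_two_plain[OF assms(2) tuv(1,2) la lb] by blast
    then have "concurrent N t u" using rM unfolding concurrent_def by (metis add_mset_add_single add_mset_commute)
    then show False using assms(3) tuv i1 unfolding sc_net_def by blast
  qed
  have refbc: "\<not> step_enabled N M {#b, c#}"
  proof
    assume "step_enabled N M {#b, c#}"
    then have "enabled N M {#u, v#}" using step_enabled_two_plain[OF assms(2) tuv(2,3) lb lc] by blast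
    then have "concurrent N u v" using rM unfolding concurrent_def by (metis add_mset_add_single add_mset_commute)
    then show False using assms(3) tuv i2 unfolding sc_net_def by blast
  qed
  have enac: "step_enabled N M {#a, c#}"
  proof -
    have "\<And>s. flow_st N s t + flow_st N s v \<le> M s"
    proof -
      fix s
      have "min (flow_st N s t) (flow_st N s v) = 0" using fun_cong[OF i3, of s]
        by (simp add: pre_t_def inf_fun_def inf_nat_def)
      then show "flow_st N s t + flow_st N s v \<le> M s" using Mt[of s] Mv[of s] by linarith
    qed
    then have "enabled N M {#t, v#}" by (rule enabled_two[OF tuv(1,3)])
    then show ?thesis unfolding step_enabled_def using la lc
      by (intro exI[of _ "{#t, v#}"]) auto
  qed
  have enb: "step_enabled N M {#b#}"
    using enabled_one[OF tuv(2) Mu] lb unfolding step_enabled_def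
    by (intro exI[of _ "{#u#}"]) auto
  define X0 where "X0 = {{#a, b#}, {#b, c#}}"
  have "step_failure_pair N \<sigma> X0"
    unfolding step_failure_pair_def X0_def using wN nT refab refbc by auto
  then have "step_failure_pair D \<sigma> X0" using eq unfolding sf_equiv_def by blast
  then obtain MD where wD: "wtrace D (initial D) \<sigma> MD" and nTD: "\<not> (\<exists>M'. lstep D MD Tau M')"
    and refD: "\<forall>A\<in>X0. \<not> step_enabled D MD A"
    unfolding step_failure_pair_def by blast
  have rD: "reachable D MD" using wtrace_reach[OF wD reachable.init] .
  have key: "step_enabled D MD A" if "step_enabled N M A" "A \<noteq> {#}" for A
  proof (rule ccontr)
    assume "\<not> step_enabled D MD A"
    then have "step_failure_pair D \<sigma> (insert A X0)"
      unfolding step_failure_pair_def X0_def using wD nTD refD that(2) unfolding X0_def by auto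
    then have "step_failure_pair N \<sigma> (insert A X0)" using eq unfolding sf_equiv_def by blast
    then obtain M' where "wtrace N (initial N) \<sigma> M'" "\<not> step_enabled N M' A"
      unfolding step_failure_pair_def by blast
    moreover have "M' = M" using plain_det[OF assms(2)] wN calculation(1) by blast
    ultimately show False using that(1) by simp
  qed
  have Dac: "step_enabled D MD {#a, c#}" using key enac by simp
  have Db: "step_enabled D MD {#b#}" using key enb by simp
  from Dac obtain G where G: "image_mset (label D) G = {#Vis a, Vis c#}" "enabled D MD G"
    unfolding step_enabled_def by auto
  from image_two[OF G(1)] obtain t' v' where tv': "G = {#t', v'#}" "label D t' = Vis a" "label D v' = Vis c"
    by blast
  from Db obtain G2 where G2: "image_mset (label D) G2 = {#Vis b#}" "enabled D MD G2"
    unfolding step_enabled_def by auto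
  from image_one[OF G2(1)] obtain u' where u': "G2 = {#u'#}" "label D u' = Vis b" by blast
  have T': "t' \<in> transitions D" "v' \<in> transitions D" "u' \<in> transitions D"
    using enabled_trans G(2) G2(2) tv'(1) u'(1) by fastforce+
  have Ft: "\<And>s. flow_st D s t' \<le> MD s" and Fv: "\<And>s. flow_st D s v' \<le> MD s"
    and Fu: "\<And>s. flow_st D s u' \<le> MD s"
    using enabled_pre G(2) G2(2) tv'(1) u'(1) by fastforce+
  from assms(6) obtain Df :: "'s2 + 't2 \<Rightarrow> 's2 + 't2" where
    D1: "\<forall>s\<in>places D. \<forall>t\<in>transitions D. flow_st D s t > 0 \<longrightarrow> Df (Inr t) = Df (Inl s)"
    and D2: "\<forall>t\<in>transitions D. \<forall>u\<in>transitions D. concurrent D t u \<longrightarrow> Df (Inr t) \<noteq> Df (Inr u)"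
    unfolding distributed_def by blast
  have "concurrent D t' v'" using rD G(2) tv'(1) unfolding concurrent_def by (metis add_mset_add_single add_mset_commute)
  then have ne: "Df (Inr t') \<noteq> Df (Inr v')" using D2 T' by blast
  show False
  proof (cases "Df (Inr t') = Df (Inr u')")
    case False
    then have "enabled D MD {#t', u'#}" using dist_combine[OF assms(5) D1 T'(1,3) _ Ft Fu] by blast
    then have "step_enabled D MD {#a, b#}" unfolding step_enabled_def using tv' u'
      by (intro exI[of _ "{#t', u'#}"]) auto
    then show False using refD unfolding X0_def by auto
  next
    case True
    then have "Df (Inr u') \<noteq> Df (Inr v')" using ne by simp
    then have "enabled D MD {#u', v'#}" using dist_combine[OF assms(5) D1 T'(3,2) _ Fu Fv] by blast
    then have "step_enabled D MD {#b, c#}" unfolding step_enabled_def using tv' u'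
      by (intro exI[of _ "{#u', v'#}"]) auto
    then show False using refD unfolding X0_def by auto
  qed
qed

end
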